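(* Let $u:(0,\infty)\to(0,\infty)$ be a stable function bounded from above by some $u^\infty>0$. For every $x>0$ the equation $\eta=\frac{1}{\frac1x+u(\eta)}$, $\eta>0$, admits a unique solution, denoted $\eta(x)$, and the resulting mapping $\eta:(0,\infty)\to(0,\infty)$ is stable.
   Context: A function $f:(0,\infty)\to(0,\infty)$ is stable if $|f(x)-f(y)|\le\sqrt{\frac{f(x)f(y)}{xy}}|x-y|$ for all $x,y>0$. *)

theory Defs
  imports Complex_Main
begin

text \<open>A function f : (0,oo) -> (0,oo) (represented as real => real, only its values on
positive reals matter) is stable if it maps positive reals to positive reals and
|f x - f y| <= sqrt (f x f y / (x y)) |x - y| for all x, y > 0.\<close>

definition stable :: "(real \<Rightarrow> real) \<Rightarrow> bool" where
  "stable f \<longleftrightarrow> (\<forall>x>0. f x > 0) \<and>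
     (\<forall>x>0. \<forall>y>0. \<bar>f x - f y\<bar> \<le> sqrt (f x * f y / (x * y)) * \<bar>x - y\<bar>)"

end

theory Submission
  imports Defs
begin

lemma stab_iff:
  fixes a b x y :: real
  assumes "a > 0" "b > 0" "x > 0" "y > 0"
  shows "\<bar>a - b\<bar> \<le> sqrt (a * b / (x * y)) * \<bar>x - y\<bar> \<longleftrightarrow> (a*x - b*y) * (a*y - b*x) \<le> 0"
proof -
  have "\<bar>a - b\<bar> \<le> sqrt (a * b / (x * y)) * \<bar>x - y\<bar> \<longleftrightarrow> \<bar>a - b\<bar> \<le> sqrt (a * b / (x * y) * (x - y)^2)"
    by (subst real_sqrt_mult) simp
  also have "\<dots> \<longleftrightarrow> (a - b)^2 \<le> a * b / (x * y) * (x - y)^2"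
    by (subst real_sqrt_abs[symmetric], rule real_sqrt_le_iff)
  also have "\<dots> \<longleftrightarrow> (a - b)^2 * (x*y) \<le> a * b * (x - y)^2"
    using assms by (simp add: field_simps)
  also have "\<dots> \<longleftrightarrow> (a*x - b*y) * (a*y - b*x) \<le> 0"
    by (simp add: algebra_simps power2_eq_square)
  finally show ?thesis .
qed

lemma stable_iff2:
  "stable f \<longleftrightarrow> (\<forall>x>0. f x > 0) \<and> (\<forall>x>0. \<forall>y>0. (f x*x - f y*y) * (f x*y - f y*x) \<le> 0)"
proof -
  have "(\<forall>x>0. f x > 0) \<Longrightarrow> (\<forall>x>0. \<forall>y>0. \<bar>f x - f y\<bar> \<le> sqrt (f x * f y / (x * y)) * \<bar>x - y\<bar>)
     \<longleftrightarrow> (\<forall>x>0. \<forall>y>0. (f x*x - f y*y) * (f x*y - f y*x) \<le> 0)"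
    by (simp add: stab_iff)
  thus ?thesis unfolding stable_def by blast
qed

lemma pair_le:
  assumes "stable u" "0 < s" "s \<le> t"
  shows "s * u s \<le> t * u t \<and> u t * s \<le> u s * t"
proof -
  have t: "t > 0" using assms by linarith
  have us: "u s > 0" "u t > 0" using assms t unfolding stable_def by auto
  have p: "(u s*s - u t*t) * (u s*t - u t*s) \<le> 0" using assms t unfolding stable_iff2 by blast
  have A: "s * u s \<le> t * u t"
  proof (rule ccontr)
    assume c: "\<not> ?thesis"
    have "u s * t \<ge> u s * s" using us assms by (simp add: mult_left_mono)
    moreover have "u t * s \<le> u t * t" using us assms by (simp add: mult_left_mono)
    ultimately have "u s*t - u t*s > 0" using c by (simp add: mult.commute)
    moreover have "u s*s - u t*t > 0" using c by (simp add: mult.commute)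
    ultimately have "(u s*s - u t*t) * (u s*t - u t*s) > 0" by (rule mult_pos_pos[rotated])
    thus False using p by linarith
  qed
  moreover have "u t * s \<le> u s * t"
  proof (rule ccontr)
    assume c: "\<not> ?thesis"
    hence "u s*t - u t*s < 0" by simp
    moreover have "u s*s - u t*t \<le> 0" using A by (simp add: mult.commute)
    ultimately have "(u s*s - u t*t) * (u s*t - u t*s) \<ge> 0" by (simp add: mult_nonpos_nonpos)
    hence "u s*s - u t*t \<ge> 0" using p \<open>u s*t - u t*s < 0\<close>
      by (simp add: mult_le_0_iff)
    hence e: "u s * s = u t * t" using \<open>u s*s - u t*t \<le> 0\<close> by simp
    have "(u t * s) * t = (u s * s) * s" using e by (simp add: algebra_simps)
    also have "\<dots> \<le> (u s * t) * t" using us assms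
      by (intro mult_mono) (auto intro: mult_left_mono)
    finally have "u t * s \<le> u s * t" using t by simp
    then show False using c by simp
  qed
  ultimately show ?thesis by blast
qed

lemma u_cont:
  assumes "stable u" "x > 0"
  shows "isCont u x"
proof -
  have ux: "u x > 0" using assms unfolding stable_def by auto
  have bnd: "\<bar>u z - u x\<bar> \<le> 2 * u x / x * \<bar>z - x\<bar>" if z: "z > x/2" for z
  proof -
    have zp: "z > 0" using z assms by linarith
    have uz: "u z > 0" using zp assms unfolding stable_def by auto
    show ?thesis
    proof (cases "z \<ge> x")
      case True
      from pair_le[OF assms(1) assms(2) True]
      have m: "x * u x \<le> z * u z" "u z * x \<le> u x * z" by auto
      have "u z - u x \<le> u x * (z - x) / x" using m assms by (simp add: field_simps)
      moreover have "u x - u z \<le> u x * (z - x) / z" using m zp by (simp add: field_simps)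
      moreover have "u x * (z - x) / z \<le> u x * (z - x) / x"
        using True ux assms by (intro divide_left_mono) auto
      moreover have "u x * (z - x) / x \<le> 2 * u x / x * \<bar>z - x\<bar>" using True ux assms
        by (simp add: field_simps)
      ultimately show ?thesis by linarith
    next
      case False
      hence F: "z \<le> x" by simp
      from pair_le[OF assms(1) zp F]
      have m: "z * u z \<le> x * u x" "u x * z \<le> u z * x" by auto
      have "u z - u x \<le> u x * (x - z) / z" using m zp by (simp add: field_simps)
      moreover have "u x - u z \<le> u x * (x - z) / x" using m assms by (simp add: field_simps)
      moreover have "u x * (x - z) / z \<le> 2 * u x / x * \<bar>z - x\<bar>"
      proof -
        have "1 / z \<le> 2 / x" using z zp assms by (simp add: field_simps)
        hence "(u x * (x - z)) * (1 / z) \<le> (u x * (x - z)) * (2 / x)"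
          using F ux by (intro mult_left_mono) auto
        thus ?thesis using F by (simp add: abs_if mult.commute mult.left_commute)
      qed
      moreover have "u x * (x - z) / x \<le> 2 * u x / x * \<bar>z - x\<bar>" using F ux assms
        by (simp add: field_simps)
      ultimately show ?thesis by linarith
    qed
  qed
  show ?thesis unfolding isCont_def LIM_eq
  proof (intro allI impI)
    fix r :: real assume r: "r > 0"
    define s where "s = min (x/2) (r * x / (4 * u x))"
    have s: "s > 0" using r ux assms by (simp add: s_def)
    show "\<exists>s>0. \<forall>z. z \<noteq> x \<and> norm (z - x) < s \<longrightarrow> norm (u z - u x) < r"
    proof (intro exI[of _ s] conjI allI impI s)
      fix z assume "z \<noteq> x \<and> norm (z - x) < s"
      hence zx: "\<bar>z - x\<bar> < s" by simp
      hence "\<bar>z - x\<bar> < x/2" unfolding s_def by simp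
      hence "z > x/2" by arith
      hence "\<bar>u z - u x\<bar> \<le> 2 * u x / x * \<bar>z - x\<bar>" by (rule bnd)
      also have "\<dots> \<le> 2 * u x / x * s" using zx ux assms by (intro mult_left_mono) auto
      also have "\<dots> \<le> 2 * u x / x * (r * x / (4 * u x))" using ux assms
        by (intro mult_left_mono) (auto simp: s_def)
      also have "\<dots> < r" using ux assms r by (simp add: field_simps)
      finally show "norm (u z - u x) < r" by simp
    qed
  qed
qed

lemma sol_iff:
  assumes "stable u" "x > 0" "e > 0"
  shows "e = 1 / (1 / x + u e) \<longleftrightarrow> e / x + e * u e = 1"
proof -
  have "u e > 0" using assms unfolding stable_def by auto
  hence D: "1 / x + u e > 0" using assms by (simp add: add_pos_pos)
  have "e = 1 / (1 / x + u e) \<longleftrightarrow> e * (1 / x + u e) = 1"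
    using D by (auto simp: field_simps)
  also have "\<dots> \<longleftrightarrow> e / x + e * u e = 1" by (simp add: algebra_simps)
  finally show ?thesis .
qed

lemma exist_sol:
  assumes "stable u" "U > 0" "\<forall>x>0. u x \<le> U" "x > 0"
  shows "\<exists>e. e > 0 \<and> e / x + e * u e = 1"
proof -
  define a where "a = min (x/3) (1/(3*U))"
  have a: "a > 0" using assms by (simp add: a_def)
  have "a / x \<le> 1/3" using assms by (simp add: a_def field_simps)
  moreover have "a * u a \<le> a * U" using assms a by (intro mult_left_mono) auto
  moreover have "a * U \<le> 1/3" using assms by (simp add: a_def min_def field_simps)
  ultimately have fa: "a / x + a * u a \<le> 1" by linarith
  have "u (2*x) > 0" using assms unfolding stable_def by auto
  hence fb: "1 \<le> (2*x) / x + (2*x) * u (2*x)" using assms by simp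
  have ab: "a \<le> 2*x" using assms by (simp add: a_def)
  have "continuous_on {a..2*x} (\<lambda>e. e / x + e * u e)"
  proof (intro continuous_at_imp_continuous_on ballI)
    fix e assume "e \<in> {a..2*x}"
    hence "e > 0" using a by auto
    hence "isCont u e" using u_cont assms by blast
    thus "isCont (\<lambda>e. e / x + e * u e) e" using assms(4) by (intro continuous_intros) auto
  qed
  from IVT'[of "\<lambda>e. e / x + e * u e", OF fa fb ab this]
  obtain e where "a \<le> e" "e / x + e * u e = 1" by blast
  thus ?thesis using a by (intro exI[of _ e]) auto
qed

lemma uniq_sol:
  assumes "stable u" "x > 0" "e1 > 0" "e2 > 0" "e1 / x + e1 * u e1 = 1" "e2 / x + e2 * u e2 = 1"
  shows "e1 = e2"
proof (rule ccontr)
  assume "e1 \<noteq> e2"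
  then consider "e1 < e2" | "e2 < e1" by linarith
  then show False
  proof cases
    case 1
    have "e1 * u e1 \<le> e2 * u e2" using pair_le[OF assms(1) assms(3)] 1 by auto
    moreover have "e1 / x < e2 / x" using 1 assms by (simp add: divide_strict_right_mono)
    ultimately show False using assms by linarith
  next
    case 2
    have "e2 * u e2 \<le> e1 * u e1" using pair_le[OF assms(1) assms(4)] 2 by auto
    moreover have "e2 / x < e1 / x" using 2 assms by (simp add: divide_strict_right_mono)
    ultimately show False using assms by linarith
  qed
qed

lemma E_order:
  assumes "stable u" "0 < x" "x \<le> y" "a > 0" "b > 0"
    "a / x + a * u a = 1" "b / y + b * u b = 1"
  shows "(a*x - b*y) * (a*y - b*x) \<le> 0"
proof -
  have y: "y > 0" using assms by linarith
  have ab: "a \<le> b"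
  proof (rule ccontr)
    assume "\<not> a \<le> b"
    hence ba: "b < a" by simp
    have "b * u b \<le> a * u a" using pair_le[OF assms(1) assms(5)] ba by auto
    hence "a / x \<le> b / y" using assms by linarith
    also have "b / y < a / y" using ba y by (simp add: divide_strict_right_mono)
    also have "a / y \<le> a / x" using assms by (simp add: divide_left_mono)
    finally show False by simp
  qed
  have "a * u a \<le> b * u b" using pair_le[OF assms(1) assms(4) ab] by auto
  hence "b / y \<le> a / x" using assms by linarith
  hence h1: "b * x \<le> a * y" using assms y by (simp add: field_simps)
  have h2: "a * x \<le> b * y" using ab assms by (intro mult_mono) auto
  show ?thesis using h1 h2 by (intro mult_nonpos_nonneg) auto
qed

theorem proposition4:
  fixes u :: "real \<Rightarrow> real" and u_inf :: real
  assumes "stable u"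
    and "u_inf > 0"
    and "\<forall>x>0. u x \<le> u_inf"
  shows "(\<forall>x>0. \<exists>!\<eta>. \<eta> > 0 \<and> \<eta> = 1 / (1 / x + u \<eta>))
         \<and> stable (\<lambda>x. THE \<eta>. \<eta> > 0 \<and> \<eta> = 1 / (1 / x + u \<eta>))"
proof -
  have sol: "\<exists>!\<eta>. \<eta> > 0 \<and> \<eta> = 1 / (1 / x + u \<eta>)" if x: "x > 0" for x
  proof -
    obtain e where e: "e > 0" "e / x + e * u e = 1" using exist_sol[OF assms x] by blast
    show ?thesis
    proof (rule ex1I[of _ e])
      show "e > 0 \<and> e = 1 / (1 / x + u e)" using e sol_iff[OF assms(1) x] by auto
    next
      fix e2 assume "e2 > 0 \<and> e2 = 1 / (1 / x + u e2)"
      thus "e2 = e" using e sol_iff[OF assms(1) x] uniq_sol[OF assms(1) x] by blast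
    qed
  qed
  define E where "E = (\<lambda>x. THE \<eta>. \<eta> > 0 \<and> \<eta> = 1 / (1 / x + u \<eta>))"
  have E: "E x > 0 \<and> E x / x + E x * u (E x) = 1" if x: "x > 0" for x
  proof -
    have "E x > 0 \<and> E x = 1 / (1 / x + u (E x))"
      unfolding E_def using theI'[OF sol[OF x]] .
    thus ?thesis using sol_iff[OF assms(1) x] by blast
  qed
  have "stable E"
    unfolding stable_iff2
  proof (intro conjI allI impI)
    fix x :: real assume "x > 0" thus "E x > 0" using E by blast
  next
    fix x y :: real assume x: "x > 0" and y: "y > 0"
    show "(E x * x - E y * y) * (E x * y - E y * x) \<le> 0"
    proof (cases "x \<le> y")
      case True
      show ?thesis using E_order[OF assms(1) x True] E x y by blast
    next
      case False
      hence "y \<le> x" by simp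
      have "(E y * y - E x * x) * (E y * x - E x * y) \<le> 0"
        using E_order[OF assms(1) y \<open>y \<le> x\<close>] E x y by blast
      thus ?thesis by (simp add: algebra_simps)
    qed
  qed
  thus ?thesis using sol unfolding E_def by blast
qed
end
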